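(* Let $p\in\mathcal C^2(\mathbb R)$ with $0<a\le p(t)\le b$ for all $t$ and $\dot p,\ddot p$ bounded. Suppose there are $\tilde t_1<\tilde t_2$ such that $\dot p$ attains its maximum $\sup_{t\in\mathbb R}\dot p(t)$ at both $\tilde t_1$ and $\tilde t_2$, and $p(\tilde t_1)>p(\tilde t_2)$. Then the ping-pong map $(t_0,v_0)\mapsto(t_1,v_1)$ on $\mathbb R\times(v_*,\infty)$ is not injective: there exist two distinct points with the same image.
   Context: Ping-pong map for the forcing $p$: let $v_*=2\max\{\sup_t\dot p(t),0\}$. For $(t_0,v_0)\in\mathbb R\times(v_*,\infty)$, let $\tilde t$ be the unique solution of $(\tilde t-t_0)v_0=p(\tilde t)$, and set $v_1=v_0-2\dot p(\tilde t)$, $t_1=\tilde t+p(\tilde t)/v_1$. *)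

theory Defs
  imports "HOL-Analysis.Analysis"
begin

definition vstar :: "(real \<Rightarrow> real) \<Rightarrow> real" where
  "vstar dp = 2 * max (Sup (range dp)) 0"

definition impact_time :: "(real \<Rightarrow> real) \<Rightarrow> real \<Rightarrow> real \<Rightarrow> real" where
  "impact_time p t0 v0 = (THE t. (t - t0) * v0 = p t)"

definition pingpong :: "(real \<Rightarrow> real) \<Rightarrow> (real \<Rightarrow> real) \<Rightarrow> real \<times> real \<Rightarrow> real \<times> real" where
  "pingpong p dp z =
     (let t0 = fst z; v0 = snd z;
          tt = impact_time p t0 v0;
          v1 = v0 - 2 * dp tt
      in (tt + p tt / v1, v1))"

end

theory Submission
  imports Defs
begin

theorem mainTheorem8:
  fixes p dp ddp :: "real \<Rightarrow> real" and a b s1 s2 :: real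
  assumes dp: "\<And>t. (p has_real_derivative dp t) (at t)"
    and ddp: "\<And>t. (dp has_real_derivative ddp t) (at t)"
    and ddp_cont: "continuous_on UNIV ddp"
    and a_pos: "0 < a"
    and p_bounds: "\<And>t. a \<le> p t \<and> p t \<le> b"
    and dp_bdd: "bounded (range dp)"
    and ddp_bdd: "bounded (range ddp)"
    and s12: "s1 < s2"
    and max1: "dp s1 = Sup (range dp)"
    and max2: "dp s2 = Sup (range dp)"
    and p_gt: "p s1 > p s2"
  shows "\<exists>z1 z2. z1 \<in> UNIV \<times> {vstar dp<..} \<and> z2 \<in> UNIV \<times> {vstar dp<..} \<and>
           z1 \<noteq> z2 \<and> pingpong p dp z1 = pingpong p dp z2"
proof -
  define M where "M = Sup (range dp)"
  have le: "dp t \<le> M" for t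
    unfolding M_def using dp_bdd by (intro cSup_upper) (auto simp: bounded_imp_bdd_above)
  have M0: "M \<ge> 0"
  proof (rule ccontr)
    assume "\<not> M \<ge> 0"
    hence Mn: "M < 0" by simp
    define T where "T = (b - a + 1) / (- M)"
    have Tpos: "T > 0" unfolding T_def using Mn p_bounds[of 0] by (auto simp: divide_pos_neg)
    obtain z where "p T - p 0 = (T - 0) * dp z"
      using MVT2[of 0 T p dp] Tpos dp by blast
    hence "p T \<le> p 0 + T * M" using le[of z] Tpos
      by (smt (verit) mult_left_mono)
    also have "T * M = -(b - a + 1)" unfolding T_def using Mn by (simp add: field_simps)
    finally show False using p_bounds[of 0] p_bounds[of T] by linarith
  qed
  define w where "w = (p s1 - p s2) / (s2 - s1)"
  have wpos: "w > 0" unfolding w_def using s12 p_gt by simp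
  define v0 where "v0 = w + 2 * M"
  have v0gt: "v0 > vstar dp" unfolding v0_def vstar_def M_def[symmetric] using M0 wpos by simp
  have v0M: "v0 > M" unfolding v0_def using M0 wpos by simp
  have imp: "impact_time p (s - p s / v0) v0 = s" for s
  proof -
    let ?g = "\<lambda>t. (t - (s - p s / v0)) * v0 - p t"
    have gd: "(?g has_real_derivative (v0 - dp t)) (at t)" for t
      by (auto intro!: derivative_eq_intros dp)
    have mono: "x < y \<Longrightarrow> ?g x < ?g y" for x y
      apply (rule DERIV_pos_imp_increasing[of x y ?g])
      using gd le v0M by (auto intro!: exI[of _ "v0 - dp _"]) (smt (verit) le)
    have gs: "?g s = 0" using v0M M0 by (simp add: field_simps)
    show ?thesis unfolding impact_time_def
    proof (rule the_equality)
      show "(s - (s - p s / v0)) * v0 = p s" using gs by simp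
    next
      fix t assume "(t - (s - p s / v0)) * v0 = p t"
      hence "?g t = 0" by simp
      thus "t = s" using mono[of t s] mono[of s t] gs by (cases "t < s"; cases "s < t") auto
    qed
  qed
  define z1 where "z1 = (s1 - p s1 / v0, v0)"
  define z2 where "z2 = (s2 - p s2 / v0, v0)"
  have ne: "z1 \<noteq> z2"
  proof
    assume "z1 = z2"
    hence "s1 - s2 = (p s1 - p s2) / v0" unfolding z1_def z2_def by (simp add: diff_divide_distrib)
    moreover have "(p s1 - p s2) / v0 > 0" using p_gt v0M M0 by simp
    ultimately show False using s12 by simp
  qed
  have v1: "v0 - 2 * dp s1 = w" "v0 - 2 * dp s2 = w"
    using max1 max2 unfolding v0_def M_def by auto
  have eq: "s1 + p s1 / w = s2 + p s2 / w"
  proof -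
    have "p s1 / w - p s2 / w = (p s1 - p s2) / w" by (simp add: diff_divide_distrib)
    also have "\<dots> = s2 - s1" unfolding w_def using s12 p_gt by simp
    finally show ?thesis by simp
  qed
  have "pingpong p dp z1 = pingpong p dp z2"
    unfolding pingpong_def z1_def z2_def Let_def using imp[of s1] imp[of s2] v1 eq by simp
  thus ?thesis using ne v0gt unfolding z1_def z2_def by blast
qed

end
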